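(* Let $n$ be a positive integer and let $l$ be an indeterminate. For $1\le i,j\le n$ define $$b_{i,j}=\sum_{p\in\mathbb{Z}}(-1)^j\binom{j-1}{p}\binom{p-n+j-l+i-2}{2i-1}$$ and $$y_{i,j}=\sum_{t\in\mathbb{Z}}2(-1)^{t+j}3^{1-j}\frac{(j)_j}{(1)_{j-t}\,(1)_{t-i}\,(3-i+2n+2l-2t)_i}.$$ Then, as an identity of rational functions in $l$, for all $1\le i\le j\le n$, $$\sum_{k=1}^n b_{i,k}\,y_{k,j}=\begin{cases}1,& i=j,\\ 0,& i<j,\end{cases}$$ i.e. the product $(b_{i,j})_{1\le i,j\le n}\cdot(y_{i,j})_{1\le i,j\le n}$ is lower triangular with all diagonal entries equal to $1$.
   Context: Binomial coefficients: for an integer $k\ge0$, $\binom{x}{k}=\frac{x(x-1)\cdots(x-k+1)}{k!}$ (a polynomial in $x$), and $\binom{x}{k}=0$ for negative integers $k$. Pochhammer symbol: $(a)_k=a(a+1)\cdots(a+k-1)$ for $k>0$, $(a)_0=1$; $1/(1)_k$ is interpreted as $0$ for negative integers $k$, so the sum defining $y_{i,j}$ runs over $i\le t\le j$. *)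

theory Defs
  imports Complex_Main
begin

text \<open>Entries b_{i,j}. The factor binom(j-1,p) vanishes unless 0 <= p <= j-1,
  so the sum over all integers p reduces to p = 0..j-1.\<close>
definition bmat :: "nat \<Rightarrow> 'a::field_char_0 \<Rightarrow> nat \<Rightarrow> nat \<Rightarrow> 'a" where
  "bmat n l i j = (\<Sum>p = 0..j - 1.
      (-1) ^ j * of_nat ((j - 1) choose p)
        * ((of_int (int p - int n + int j + int i - 2) - l) gchoose (2 * i - 1)))"

text \<open>Entries y_{i,j}. Since 1/(1)_k = 0 for negative k, the sum over all
  integers t reduces to i <= t <= j.  Here 3^(1-j) = 1/3^(j-1) as j >= 1.\<close>
definition ymat :: "nat \<Rightarrow> 'a::field_char_0 \<Rightarrow> nat \<Rightarrow> nat \<Rightarrow> 'a" where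
  "ymat n l i j = (\<Sum>t = i..j.
      2 * (-1) ^ (t + j) * pochhammer (of_nat j) j
        / (3 ^ (j - 1) * pochhammer 1 (j - t) * pochhammer 1 (t - i)
           * pochhammer (of_int (3 - int i + 2 * int n - 2 * int t) + 2 * l) i))"

end

theory Submission
  imports Defs "HOL-Computational_Algebra.Polynomial" "HOL-Computational_Algebra.Formal_Power_Series"
begin

definition act1 :: "'a::comm_ring_1 poly \<Rightarrow> (int \<Rightarrow> 'a) \<Rightarrow> int \<Rightarrow> 'a" where
  "act1 p g y = (\<Sum>b\<le>degree p. coeff p b * g (y + int b))"

lemma act1_bound:
  assumes "degree p \<le> D"
  shows "act1 p g y = (\<Sum>b\<le>D. coeff p b * g (y + int b))"
  unfolding act1_def
  by (rule sum.mono_neutral_left) (use assms in \<open>auto simp: coeff_eq_0\<close>)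

lemma act1_pCons: "act1 (pCons a p) g y = a * g y + act1 p g (y + 1)"
proof -
  have "act1 (pCons a p) g y = (\<Sum>b\<le>Suc (degree p). coeff (pCons a p) b * g (y + int b))"
    by (rule act1_bound) (simp add: degree_pCons_le)
  also have "\<dots> = a * g y + (\<Sum>b\<le>degree p. coeff p b * g (y + 1 + int b))"
    by (subst sum.atMost_Suc_shift) (simp add: algebra_simps)
  finally show ?thesis by (simp add: act1_def)
qed

lemma act1_0 [simp]: "act1 0 g y = 0"
  by (simp add: act1_def)

lemma act1_add: "act1 (p + q) g y = act1 p g y + act1 q g y"
proof -
  let ?D = "max (degree p) (degree q)"
  have "act1 (p + q) g y = (\<Sum>b\<le>?D. coeff (p + q) b * g (y + int b))"
    by (rule act1_bound) (simp add: degree_add_le)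
  also have "\<dots> = (\<Sum>b\<le>?D. coeff p b * g (y + int b)) + (\<Sum>b\<le>?D. coeff q b * g (y + int b))"
    by (simp add: algebra_simps sum.distrib)
  also have "\<dots> = act1 p g y + act1 q g y"
    by (simp add: act1_bound[symmetric])
  finally show ?thesis .
qed

lemma act1_smult: "act1 (smult c p) g y = c * act1 p g y"
proof -
  have "act1 (smult c p) g y = (\<Sum>b\<le>degree p. coeff (smult c p) b * g (y + int b))"
    by (rule act1_bound) (simp add: degree_smult_le)
  thus ?thesis by (simp add: act1_def sum_distrib_left mult.assoc)
qed

lemma act1_mult: "act1 (p * q) g y = act1 p (act1 q g) y"
proof (induction p arbitrary: y)
  case 0
  then show ?case by simp
next
  case (pCons a p)
  have "act1 (pCons a p * q) g y = a * act1 q g y + act1 (p * q) g (y + 1)"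
    by (simp add: act1_add act1_smult act1_pCons)
  also have "\<dots> = act1 (pCons a p) (act1 q g) y"
    by (simp add: act1_pCons pCons.IH)
  finally show ?case .
qed

lemma act1_const [simp]: "act1 [:c:] g y = c * g y"
  by (simp add: act1_def)

lemma act1_one [simp]: "act1 1 g y = g y"
  by (simp add: act1_def)

lemma act1_X [simp]: "act1 [:0, 1:] g y = g (y + 1)"
  by (simp add: act1_pCons)

lemma act1_Xpow: "act1 ([:0, 1:] ^ m) g y = g (y + int m)"
proof (induction m arbitrary: y)
  case 0
  then show ?case by simp
next
  case (Suc m)
  have "act1 ([:0, 1:] ^ Suc m) g y = act1 [:0, 1:] (act1 ([:0, 1:] ^ m) g) y"
    by (simp only: power_Suc act1_mult)
  also have "\<dots> = g (y + int (Suc m))" by (simp add: Suc.IH algebra_simps)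
  finally show ?case .
qed

lemma act1_of_nat_mult: "act1 (of_nat n * p) g y = of_nat n * act1 p g y"
  by (simp add: of_nat_poly act1_smult)

lemma act1_of_int_mult: "act1 (of_int n * p) g y = of_int n * act1 p g y"
  by (simp add: of_int_poly act1_smult)

lemma act1_const_mult: "act1 ([:c:] * p) g y = c * act1 p g y"
  by (simp add: act1_smult)

lemma act1_minus: "act1 (- p) g y = - act1 p g y"
  using act1_smult[of "-1" p g y] by simp

lemma act1_diff: "act1 (p - q) g y = act1 p g y - act1 q g y"
  using act1_add[of p "- q" g y] act1_minus[of q g y] by simp

lemma act1_sum: "act1 (\<Sum>i\<in>S. P i) g y = (\<Sum>i\<in>S. act1 (P i) g y)"
  by (induction S rule: infinite_finite_induct) (auto simp: act1_add)

lemma act1_fun_add: "act1 p (\<lambda>y. g y + h y) y = act1 p g y + act1 p h y"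
  by (simp add: act1_def algebra_simps sum.distrib)

lemma act1_fun_mult: "act1 p (\<lambda>y. c * g y) y = c * act1 p g y"
  by (simp add: act1_def sum_distrib_left algebra_simps)

lemma act1_fun_sum: "act1 p (\<lambda>y. \<Sum>i\<in>S. G i y) y = (\<Sum>i\<in>S. act1 p (G i) y)"
  by (simp add: act1_def sum_distrib_left sum.swap[of _ S])

lemma act1_fun_zero [simp]: "act1 p (\<lambda>y. 0) y = 0"
  by (simp add: act1_def)

lemma act1_cong: "(\<And>z. g z = h z) \<Longrightarrow> act1 p g y = act1 p h y"
  by (simp add: act1_def)


definition act2 :: "'a::comm_ring_1 poly poly \<Rightarrow> (int \<Rightarrow> int \<Rightarrow> 'a) \<Rightarrow> int \<Rightarrow> int \<Rightarrow> 'a" where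
  "act2 P F e x = (\<Sum>a\<le>degree P. act1 (coeff P a) (\<lambda>e'. F e' (x + int a)) e)"

lemma act2_bound:
  assumes "degree P \<le> D"
  shows "act2 P F e x = (\<Sum>a\<le>D. act1 (coeff P a) (\<lambda>e'. F e' (x + int a)) e)"
  unfolding act2_def
  by (rule sum.mono_neutral_left) (use assms in \<open>auto simp: coeff_eq_0\<close>)

lemma act2_pCons: "act2 (pCons p P) F e x = act1 p (\<lambda>e'. F e' x) e + act2 P F e (x + 1)"
proof -
  have "act2 (pCons p P) F e x = (\<Sum>a\<le>Suc (degree P). act1 (coeff (pCons p P) a) (\<lambda>e'. F e' (x + int a)) e)"
    by (rule act2_bound) (simp add: degree_pCons_le)
  also have "\<dots> = act1 p (\<lambda>e'. F e' x) e + (\<Sum>a\<le>degree P. act1 (coeff P a) (\<lambda>e'. F e' (x + 1 + int a)) e)"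
    by (subst sum.atMost_Suc_shift) (simp add: algebra_simps)
  finally show ?thesis by (simp add: act2_def)
qed

lemma act2_0 [simp]: "act2 0 F e x = 0"
  by (simp add: act2_def)

lemma act2_add: "act2 (P + Q) F e x = act2 P F e x + act2 Q F e x"
proof -
  let ?D = "max (degree P) (degree Q)"
  have "act2 (P + Q) F e x = (\<Sum>a\<le>?D. act1 (coeff (P + Q) a) (\<lambda>e'. F e' (x + int a)) e)"
    by (rule act2_bound) (simp add: degree_add_le)
  also have "\<dots> = (\<Sum>a\<le>?D. act1 (coeff P a) (\<lambda>e'. F e' (x + int a)) e) + (\<Sum>a\<le>?D. act1 (coeff Q a) (\<lambda>e'. F e' (x + int a)) e)"
    by (simp add: act1_add sum.distrib)
  also have "\<dots> = act2 P F e x + act2 Q F e x"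
    by (simp add: act2_bound[symmetric])
  finally show ?thesis .
qed

lemma act2_fun_sum: "act2 P (\<lambda>e x. \<Sum>i\<in>S. G i e x) e x = (\<Sum>i\<in>S. act2 P (G i) e x)"
  by (simp add: act2_def act1_fun_sum sum.swap[of _ S])

lemma act2_fun_add: "act2 P (\<lambda>e x. F e x + G e x) e x = act2 P F e x + act2 P G e x"
  by (simp add: act2_def act1_fun_add sum.distrib)

lemma act2_fun_mult: "act2 P (\<lambda>e x. c * F e x) e x = c * act2 P F e x"
  by (simp add: act2_def act1_fun_mult sum_distrib_left)

lemma act2_fun_zero [simp]: "act2 P (\<lambda>e x. 0) e x = 0"
  by (simp add: act2_def)

lemma act2_cong: "(\<And>e x. F e x = G e x) \<Longrightarrow> act2 P F e x = act2 P G e x"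
  by (simp add: act2_def)

lemma act2_smult: "act2 (smult p Q) F e x = act1 p (\<lambda>e'. act2 Q F e' x) e"
proof -
  have "act2 (smult p Q) F e x = (\<Sum>a\<le>degree Q. act1 (coeff (smult p Q) a) (\<lambda>e'. F e' (x + int a)) e)"
    by (rule act2_bound) (simp add: degree_smult_le)
  also have "\<dots> = (\<Sum>a\<le>degree Q. act1 p (act1 (coeff Q a) (\<lambda>e'. F e' (x + int a))) e)"
    by (simp add: act1_mult)
  also have "\<dots> = act1 p (\<lambda>e'. act2 Q F e' x) e"
    by (simp add: act2_def act1_fun_sum)
  finally show ?thesis .
qed

lemma act2_mult: "act2 (P * Q) F e x = act2 P (act2 Q F) e x"
proof (induction P arbitrary: x)
  case 0
  then show ?case by simp
next
  case (pCons p P)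
  have "act2 (pCons p P * Q) F e x = act1 p (\<lambda>e'. act2 Q F e' x) e + act2 (P * Q) F e (x + 1)"
    by (simp add: act2_add act2_smult act2_pCons)
  also have "\<dots> = act2 (pCons p P) (act2 Q F) e x"
    by (simp add: act2_pCons pCons.IH)
  finally show ?case .
qed

lemma act2_constp [simp]: "act2 [:p:] F e x = act1 p (\<lambda>e'. F e' x) e"
  by (simp add: act2_pCons)

lemma act2_one [simp]: "act2 1 F e x = F e x"
  by (simp add: one_pCons act2_pCons)

lemma act2_Y [simp]: "act2 [:0, 1:] F e x = F e (x + 1)"
  by (simp add: act2_pCons one_pCons)

lemma act2_minus: "act2 (- P) F e x = - act2 P F e x"
proof -
  have e: "[:[:-1:]:] = (-1 :: 'a poly poly)" by (simp add: one_pCons)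
  have "- P = [:[:-1:]:] * P" by (simp only: e) simp
  hence "act2 (- P) F e x = act2 [:[:-1:]:] (act2 P F) e x" by (simp only: act2_mult)
  thus ?thesis by simp
qed

lemma act2_diff: "act2 (P - Q) F e x = act2 P F e x - act2 Q F e x"
  using act2_add[of P "- Q" F e x] act2_minus[of Q F e x] by simp

lemma act2_sum: "act2 (\<Sum>i\<in>S. P i) F e x = (\<Sum>i\<in>S. act2 (P i) F e x)"
  by (induction S rule: infinite_finite_induct) (auto simp: act2_add)

lemma act2_of_nat_mult: "act2 (of_nat n * P) F e x = of_nat n * act2 P F e x"
proof -
  have "of_nat n * P = [:[:of_nat n:]:] * P" by (simp add: of_nat_poly)
  hence "act2 (of_nat n * P) F e x = act2 [:[:of_nat n:]:] (act2 P F) e x" by (simp only: act2_mult)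
  thus ?thesis by simp
qed

definition ysep :: "'a::comm_ring_1 poly poly \<Rightarrow> 'a poly \<Rightarrow> bool" where
  "ysep P q \<longleftrightarrow> (\<forall>g h e x. act2 P (\<lambda>e x. g e * h x) e x = g e * act1 q h x)"

lemma ysep_one: "ysep 1 1"
  by (simp add: ysep_def)

lemma ysep_Y: "ysep [:0, 1:] [:0, 1:]"
  by (simp add: ysep_def)

lemma ysep_const: "ysep [:[:c:]:] [:c:]"
  by (simp add: ysep_def act1_fun_mult)

lemma ysep_add: "ysep P q \<Longrightarrow> ysep P' q' \<Longrightarrow> ysep (P + P') (q + q')"
  by (simp add: ysep_def act2_add act1_add algebra_simps)

lemma ysep_mult: "ysep P q \<Longrightarrow> ysep P' q' \<Longrightarrow> ysep (P * P') (q * q')"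
  unfolding ysep_def
proof (intro allI)
  fix g h e x
  assume A: "\<forall>g h e x. act2 P (\<lambda>e x. g e * h x) e x = g e * act1 q h x"
    and B: "\<forall>g h e x. act2 P' (\<lambda>e x. g e * h x) e x = g e * act1 q' h x"
  have "act2 (P * P') (\<lambda>e x. g e * h x) e x = act2 P (act2 P' (\<lambda>e x. g e * h x)) e x"
    by (rule act2_mult)
  also have "\<dots> = act2 P (\<lambda>e x. g e * act1 q' h x) e x"
    using B by (intro act2_cong) simp
  also have "\<dots> = g e * act1 q (act1 q' h) x" using A by simp
  finally show "act2 (P * P') (\<lambda>e x. g e * h x) e x = g e * act1 (q * q') h x"
    by (simp add: act1_mult)
qed

lemma ysep_power: "ysep P q \<Longrightarrow> ysep (P ^ m) (q ^ m)"
  by (induction m) (auto intro: ysep_mult ysep_one)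

lemma act2_sep:
  assumes "ysep P q"
  shows "act2 ([:p:] * P) (\<lambda>e x. g e * h x) e x = act1 p g e * act1 q h x"
proof -
  have "act2 ([:p:] * P) (\<lambda>e x. g e * h x) e x = act2 [:p:] (act2 P (\<lambda>e x. g e * h x)) e x"
    by (rule act2_mult)
  also have "\<dots> = act2 [:p:] (\<lambda>e x. g e * act1 q h x) e x"
    using assms by (intro act2_cong) (simp add: ysep_def)
  also have "\<dots> = act1 p g e * act1 q h x"
    by (simp add: act1_def sum_distrib_right algebra_simps)
  finally show ?thesis .
qed


definition refl_ok :: "'a::comm_ring_1 poly poly \<Rightarrow> 'a poly poly \<Rightarrow> nat \<Rightarrow> bool" where
  "refl_ok P P' D \<longleftrightarrow> (\<forall>G d e x. act2 P (\<lambda>e x. G e (d - e - x)) e x = act2 P' G e (d - int D - e - x))"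

lemma refl_ok_lin: "refl_ok [:[:a, b:], [:c:]:] [:[:c, b:], [:a:]:] 1"
  unfolding refl_ok_def
  by (simp add: act2_pCons act1_pCons algebra_simps)

lemma refl_ok_mult:
  assumes "refl_ok P P' D" "refl_ok Q Q' E"
  shows "refl_ok (P * Q) (P' * Q') (D + E)"
  unfolding refl_ok_def
proof (intro allI)
  fix G d e x
  have "act2 (P * Q) (\<lambda>e x. G e (d - e - x)) e x = act2 P (act2 Q (\<lambda>e x. G e (d - e - x))) e x"
    by (rule act2_mult)
  also have "\<dots> = act2 P (\<lambda>e x. act2 Q' G e ((d - int E) - e - x)) e x"
    using assms(2) unfolding refl_ok_def by (intro act2_cong) simp
  also have "\<dots> = act2 P' (act2 Q' G) e ((d - int E) - int D - e - x)"
    using assms(1) unfolding refl_ok_def by simp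
  also have "\<dots> = act2 (P' * Q') G e (d - int (D + E) - e - x)"
    by (simp add: act2_mult algebra_simps)
  finally show "act2 (P * Q) (\<lambda>e x. G e (d - e - x)) e x = act2 (P' * Q') G e (d - int (D + E) - e - x)" .
qed

lemma refl_ok_one: "refl_ok 1 1 0"
  by (simp add: refl_ok_def)

lemma refl_ok_power: "refl_ok P P' D \<Longrightarrow> refl_ok (P ^ m) (P' ^ m) (m * D)"
proof (induction m)
  case 0
  then show ?case by (simp add: refl_ok_one)
next
  case (Suc m)
  then show ?case using refl_ok_mult[of P P' D "P ^ m" "P' ^ m" "m * D"] by simp
qed

definition X2 :: "'a::comm_ring_1 poly poly" where "X2 = [:[:0, 1:]:]"
definition Y2 :: "'a::comm_ring_1 poly poly" where "Y2 = [:0, 1:]"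

definition Kp :: "nat \<Rightarrow> 'a::comm_ring_1 poly poly" where
  "Kp m = - Y2 * (1 - X2) ^ m * (X2 - Y2) ^ m * (1 + X2 + Y2) ^ m"

definition Kq :: "nat \<Rightarrow> 'a::comm_ring_1 poly poly" where
  "Kq m = - ((Y2 - X2) ^ m * (X2 - 1) ^ m * (1 + X2 + Y2) ^ m)"

lemma lin_forms:
  "- Y2 = ([:[:0, 0:], [:-1:]:] :: 'a::comm_ring_1 poly poly)"
  "- 1 = ([:[:-1, 0:], [:0:]:] :: 'a::comm_ring_1 poly poly)"
  "1 - X2 = ([:[:1, -1:], [:0:]:] :: 'a::comm_ring_1 poly poly)"
  "Y2 - X2 = ([:[:0, -1:], [:1:]:] :: 'a::comm_ring_1 poly poly)"
  "X2 - Y2 = ([:[:0, 1:], [:-1:]:] :: 'a::comm_ring_1 poly poly)"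
  "X2 - 1 = ([:[:-1, 1:], [:0:]:] :: 'a::comm_ring_1 poly poly)"
  "1 + X2 + Y2 = ([:[:1, 1:], [:1:]:] :: 'a::comm_ring_1 poly poly)"
  by (simp_all add: X2_def Y2_def one_pCons)

lemma Kp_eq: "Kp m = Y2 * Kq m"
proof -
  have "(1 - X2) * (X2 - Y2) = (Y2 - X2) * ((X2 :: 'a poly poly) - 1)" by (simp add: algebra_simps)
  hence "(1 - X2) ^ m * (X2 - Y2) ^ m = (Y2 - X2) ^ m * ((X2 :: 'a poly poly) - 1) ^ m"
    by (metis power_mult_distrib)
  thus ?thesis unfolding Kp_def Kq_def by (simp add: algebra_simps)
qed

lemma refl_ok_K: "refl_ok (Kp m) (Kq m) (1 + 3 * m)"
proof -
  have a: "refl_ok (- Y2) (- 1 :: 'a poly poly) 1"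
    unfolding lin_forms by (rule refl_ok_lin)
  have b: "refl_ok ((1 - X2) ^ m) ((Y2 - X2) ^ m :: 'a poly poly) m"
    using refl_ok_power[OF refl_ok_lin[of 1 "-1" 0], of m] unfolding lin_forms by simp
  have c: "refl_ok ((X2 - Y2) ^ m) ((X2 - 1) ^ m :: 'a poly poly) m"
    using refl_ok_power[OF refl_ok_lin[of 0 1 "-1"], of m] unfolding lin_forms by simp
  have d: "refl_ok ((1 + X2 + Y2) ^ m) ((1 + X2 + Y2) ^ m :: 'a poly poly) m"
    using refl_ok_power[OF refl_ok_lin[of 1 1 1], of m] unfolding lin_forms by simp
  have "refl_ok (- Y2 * (1 - X2) ^ m * (X2 - Y2) ^ m * (1 + X2 + Y2) ^ m)
           (- 1 * (Y2 - X2) ^ m * (X2 - 1) ^ m * (1 + X2 + Y2) ^ m :: 'a poly poly) (1 + m + m + m)"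
    by (intro refl_ok_mult a b c d)
  moreover have "1 + m + m + m = 1 + 3 * m" by simp
  ultimately show ?thesis unfolding Kp_def Kq_def by (simp only:) (simp add: algebra_simps)
qed

lemma K_symmetry:
  "act2 (Kp m) (\<lambda>e x. G e (int (3 * m + 2) - e - x)) 0 0 = act2 (Kp m) G 0 (0::int)"
proof -
  have "act2 (Kp m) (\<lambda>e x. G e (int (3 * m + 2) - e - x)) 0 0 = act2 (Kq m) G 0 (int (3 * m + 2) - int (1 + 3 * m) - 0 - 0)"
    using refl_ok_K[of m] unfolding refl_ok_def by blast
  also have "\<dots> = act2 (Kq m) G 0 1" by simp
  also have "\<dots> = act2 (Kp m) G 0 0"
    by (simp add: Kp_eq act2_mult Y2_def act2_pCons)
  finally show ?thesis .
qed


lemma cp_mult: "[:p * q:] = [:p:] * [:q:]"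
  by (rule mult_to_poly[symmetric])

lemma cp_pow: "[:p ^ n:] = [:p:] ^ n"
  by (induction n) (simp_all add: one_pCons cp_mult)

lemma cp_add: "[:p + q:] = [:p:] + [:q:]"
  by simp

lemma cp_diff: "[:p - q:] = [:p:] - ([:q:] :: 'a::comm_ring_1 poly)"
  by simp

lemma cp_one: "[:1:] = (1 :: 'a::comm_ring_1 poly)"
  by (simp add: one_pCons)

lemma cp_minus_one_pow: "[:[:(-1) ^ k:]:] = ((-1) ^ k :: 'a::comm_ring_1 poly poly)"
proof -
  have "[:[:(-1::'a) ^ k:]:] = [:[:-1:] ^ k:]" by (simp add: cp_pow)
  also have "\<dots> = [:[:-1:]:] ^ k" by (simp add: cp_pow)
  also have "[:[:-1::'a:]:] = (-1 :: 'a poly poly)" by (simp add: one_pCons)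
  finally show ?thesis .
qed

lemma cp_of_nat: "[:[:of_nat n:]:] = (of_nat n :: 'a::comm_ring_1 poly poly)"
  by (simp add: of_nat_poly)

lemma act2_cconst_mult: "act2 ([:[:c:]:] * P) F e x = c * act2 P F e x"
  by (simp add: act2_smult act1_fun_mult)

lemma act2_X2 [simp]: "act2 X2 F e x = F (e + 1) x"
  by (simp add: X2_def)

lemma act2_Y2 [simp]: "act2 Y2 F e x = F e (x + 1)"
  by (simp add: Y2_def)

abbreviation PX :: "'a::comm_ring_1 poly" where "PX \<equiv> [:0, 1:]"

definition Ak :: "nat \<Rightarrow> nat \<Rightarrow> 'a::comm_ring_1 poly" where
  "Ak m k = (1 - PX) ^ m * PX ^ (m - k) * (1 + PX) ^ (m - k)"

definition Bk :: "nat \<Rightarrow> 'a::comm_ring_1 poly" where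
  "Bk k = PX ^ (k + 1) * (1 + PX) ^ k"

lemma X2_eq: "X2 = [:PX:]" by (simp add: X2_def)

lemma Ak_cp: "[:Ak m k:] = (1 - X2) ^ m * X2 ^ (m - k) * (1 + X2) ^ (m - k)"
  by (simp add: Ak_def cp_mult cp_pow cp_diff cp_add cp_one X2_eq)

lemma ysep_Bk: "ysep (Y2 ^ (k + 1) * (1 + Y2) ^ k) (Bk k)"
  unfolding Bk_def Y2_def
  by (intro ysep_mult ysep_power ysep_add ysep_one ysep_Y)

lemma Kp_expand1:
  "Kp m = (\<Sum>k\<le>m. [:[:of_nat (m choose k) * (-1) ^ (k + 1):]:] * ([:Ak m k:] * (Y2 ^ (k + 1) * (1 + Y2) ^ k)))"
proof -
  let ?WX = "X2 + X2 ^ 2 :: 'a poly poly" and ?WY = "Y2 + Y2 ^ 2 :: 'a poly poly"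
  have w: "(X2 - Y2) * (1 + X2 + Y2) = (- ?WY) + ?WX" by (simp add: algebra_simps power2_eq_square)
  have "Kp m = - Y2 * (1 - X2) ^ m * ((X2 - Y2) * (1 + X2 + Y2)) ^ m"
    by (simp add: Kp_def power_mult_distrib mult.assoc)
  also have "\<dots> = - Y2 * (1 - X2) ^ m * (\<Sum>k\<le>m. of_nat (m choose k) * (- ?WY) ^ k * ?WX ^ (m - k))"
    by (simp only: w binomial_ring)
  also have "\<dots> = (\<Sum>k\<le>m. - Y2 * (1 - X2) ^ m * (of_nat (m choose k) * (- ?WY) ^ k * ?WX ^ (m - k)))"
    by (simp add: sum_distrib_left)
  also have "\<dots> = (\<Sum>k\<le>m. [:[:of_nat (m choose k) * (-1) ^ (k + 1):]:] * ([:Ak m k:] * (Y2 ^ (k + 1) * (1 + Y2) ^ k)))"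
  proof (rule sum.cong[OF refl])
    fix k assume "k \<in> {..m}"
    have c: "[:[:of_nat (m choose k) * (-1) ^ (k + 1):]:] = (of_nat (m choose k) * (-1) ^ (k + 1) :: 'a poly poly)"
      by (simp only: cp_mult cp_of_nat cp_minus_one_pow)
    have p1: "(- ?WY) ^ k = (-1) ^ k * Y2 ^ k * (1 + Y2) ^ k"
      by (simp add: power_mult_distrib[symmetric] power2_eq_square algebra_simps)
    have p2: "?WX ^ (m - k) = X2 ^ (m - k) * (1 + X2) ^ (m - k)"
      by (simp add: power_mult_distrib[symmetric] power2_eq_square algebra_simps)
    show "- Y2 * (1 - X2) ^ m * (of_nat (m choose k) * (- ?WY) ^ k * ?WX ^ (m - k)) =
      [:[:of_nat (m choose k) * (-1) ^ (k + 1):]:] * ([:Ak m k:] * (Y2 ^ (k + 1) * (1 + Y2) ^ k))"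
      unfolding c Ak_cp p1 p2 by (simp add: algebra_simps)
  qed
  finally show ?thesis .
qed

lemma act2_Kp_sep1:
  "act2 (Kp m) (\<lambda>e x. g e * h x) e x =
     (\<Sum>k\<le>m. of_nat (m choose k) * (-1) ^ (k + 1) * (act1 (Ak m k) g e * act1 (Bk k) h x))"
  unfolding Kp_expand1 act2_sum
  by (rule sum.cong[OF refl]) (simp only: act2_cconst_mult act2_sep[OF ysep_Bk] mult.assoc)


lemma ysep_diff: "ysep P q \<Longrightarrow> ysep P' q' \<Longrightarrow> ysep (P - P') (q - q')"
  by (simp add: ysep_def act2_diff act1_diff algebra_simps)

lemma act1_diffop_gbinomial:
  "act1 ((PX - 1) ^ p) (\<lambda>e. (c + of_int e) gchoose q) e =
     (if p \<le> q then (c + of_int e) gchoose (q - p) else (0::'a::field_char_0))"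
proof (induction p arbitrary: e)
  case 0
  then show ?case by simp
next
  case (Suc p)
  have "act1 ((PX - 1) ^ Suc p) (\<lambda>e. (c + of_int e) gchoose q) e =
        act1 (PX - 1) (act1 ((PX - 1) ^ p) (\<lambda>e. (c + of_int e) gchoose q)) e"
    by (simp only: power_Suc act1_mult)
  also have "\<dots> = act1 (PX - 1) (\<lambda>e. if p \<le> q then (c + of_int e) gchoose (q - p) else 0) e"
    by (intro act1_cong) (rule Suc.IH)
  also have "\<dots> = (if Suc p \<le> q then (c + of_int e) gchoose (q - Suc p) else 0)"
  proof (cases "Suc p \<le> q")
    case True
    then obtain r where r: "q - p = Suc r" "q - Suc p = r" by (metis Suc_diff_Suc Suc_le_lessD)
    have "(c + of_int (e + 1)) gchoose (Suc r) = ((c + of_int e) + 1) gchoose (Suc r)" by (simp add: algebra_simps)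
    also have "\<dots> = ((c + of_int e) gchoose r) + ((c + of_int e) gchoose (Suc r))" by (rule gbinomial_Suc_Suc)
    finally show ?thesis using True r by (simp add: act1_diff)
  next
    case False
    then show ?thesis by (cases "p = q") (simp_all add: act1_diff)
  qed
  finally show ?case .
qed

lemma act2_const_fun_W:
  "act2 ((1 + X2 + Y2) ^ m) (\<lambda>e x. c) e x = 3 ^ m * (c::'a::comm_ring_1)"
proof (induction m arbitrary: c e x)
  case 0
  then show ?case by simp
next
  case (Suc m)
  have "act2 ((1 + X2 + Y2) ^ Suc m) (\<lambda>e x. c) e x = act2 (1 + X2 + Y2) (act2 ((1 + X2 + Y2) ^ m) (\<lambda>e x. c)) e x"
    by (simp only: power_Suc act2_mult)
  also have "\<dots> = act2 (1 + X2 + Y2) (\<lambda>e x. 3 ^ m * c) e x"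
    by (intro act2_cong) (rule Suc.IH)
  also have "\<dots> = 3 ^ Suc m * c" by (simp add: act2_add algebra_simps)
  finally show ?case .
qed

lemma Kp_split: "Kp m = (- Y2 * (1 + X2 + Y2) ^ m) * ((1 - X2) ^ m * (X2 - Y2) ^ m)"
  by (simp add: Kp_def algebra_simps)

lemma inner_expand:
  fixes g h :: "int \<Rightarrow> 'a::comm_ring_1"
  shows "act2 ((1 - X2) ^ m * (X2 - Y2) ^ m) (\<lambda>e x. g e * h x) e x =
    (\<Sum>s\<le>m. of_nat (m choose s) * (act1 ((1 - PX) ^ m * (PX - 1) ^ s) g e * act1 ((1 - PX) ^ (m - s)) h x))"
proof -
  have "(X2 - Y2) ^ m = ((X2 - 1) + (1 - Y2) :: 'a poly poly) ^ m" by simp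
  also have "\<dots> = (\<Sum>s\<le>m. of_nat (m choose s) * (X2 - 1) ^ s * (1 - Y2) ^ (m - s))"
    by (rule binomial_ring)
  finally have b: "(X2 - Y2 :: 'a poly poly) ^ m = (\<Sum>s\<le>m. of_nat (m choose s) * (X2 - 1) ^ s * (1 - Y2) ^ (m - s))" .
  have "(1 - X2 :: 'a poly poly) ^ m * (X2 - Y2) ^ m =
      (\<Sum>s\<le>m. (1 - X2) ^ m * (of_nat (m choose s) * (X2 - 1) ^ s * (1 - Y2) ^ (m - s)))"
    unfolding b by (rule sum_distrib_left)
  also have "\<dots> = (\<Sum>s\<le>m. [:[:of_nat (m choose s):]:] * ([:(1 - PX) ^ m * (PX - 1) ^ s:] * (1 - Y2) ^ (m - s)))"
    by (rule sum.cong[OF refl]) (simp only: cp_mult cp_pow cp_diff cp_one X2_def cp_of_nat mult_ac)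
  finally have eq: "(1 - X2 :: 'a poly poly) ^ m * (X2 - Y2) ^ m =
      (\<Sum>s\<le>m. [:[:of_nat (m choose s):]:] * ([:(1 - PX) ^ m * (PX - 1) ^ s:] * (1 - Y2) ^ (m - s)))" .
  have ys: "ysep ((1 - Y2) ^ (m - s)) ((1 - PX) ^ (m - s))" for s
    unfolding Y2_def by (intro ysep_power ysep_diff ysep_one ysep_Y)
  show ?thesis unfolding eq act2_sum
    by (rule sum.cong[OF refl]) (simp only: act2_cconst_mult act2_sep[OF ys])
qed

lemma pow_1mX: "(1 - PX) ^ m * (PX - 1) ^ s = smult ((-1) ^ m) ((PX - 1) ^ (m + s) :: 'a::comm_ring_1 poly)"
proof -
  have "(1 - PX) ^ m = ((-1) * (PX - 1) :: 'a poly) ^ m" by simp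
  also have "\<dots> = smult ((-1) ^ m) ((PX - 1) ^ m)"
    by (simp add: power_mult_distrib smult_power[symmetric])
  finally show ?thesis by (simp add: power_add)
qed

lemma pow_1mX': "(1 - PX) ^ m = smult ((-1) ^ m) ((PX - 1) ^ m :: 'a::comm_ring_1 poly)"
  using pow_1mX[of m 0] by simp

lemma act1_pow_1mX: "act1 ((1 - PX) ^ m * (PX - 1) ^ s) g e = (-1) ^ m * act1 ((PX - 1) ^ (m + s)) g e"
  by (subst pow_1mX) (rule act1_smult)

lemma act1_pow_1mX': "act1 ((1 - PX) ^ m) g e = (-1) ^ m * act1 ((PX - 1) ^ m) g e"
  by (subst pow_1mX') (rule act1_smult)

lemma Kp_vanish:
  fixes c b :: "'a::field_char_0"
  assumes "q1 + q2 < 2 * m"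
  shows "act2 (Kp m) (\<lambda>e x. ((c + of_int e) gchoose q1) * ((b + of_int x) gchoose q2)) 0 0 = 0"
proof -
  let ?F = "\<lambda>e x. ((c + of_int e) gchoose q1) * ((b + of_int x) gchoose q2)"
  have z: "act2 ((1 - X2) ^ m * (X2 - Y2) ^ m) ?F e x = 0" for e x
  proof -
    have "act1 ((1 - PX) ^ m * (PX - 1) ^ s) (\<lambda>e. (c + of_int e) gchoose q1) e * act1 ((1 - PX) ^ (m - s)) (\<lambda>x. (b + of_int x) gchoose q2) x = 0"
      if "s \<le> m" for s
      using assms that
      by (simp only: act1_pow_1mX act1_pow_1mX' act1_diffop_gbinomial) auto
    thus ?thesis by (simp only: inner_expand) (rule sum.neutral, simp)
  qed
  have "act2 (Kp m) ?F 0 0 = act2 (- Y2 * (1 + X2 + Y2) ^ m) (act2 ((1 - X2) ^ m * (X2 - Y2) ^ m) ?F) 0 0"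
    unfolding Kp_split by (rule act2_mult)
  also have "\<dots> = act2 (- Y2 * (1 + X2 + Y2) ^ m) (\<lambda>e x. 0) 0 0"
    by (rule act2_cong) (rule z)
  finally show ?thesis by simp
qed

lemma Kp_lead:
  fixes c b :: "'a::field_char_0"
  assumes "q1 + q2 = 2 * m"
  shows "act2 (Kp m) (\<lambda>e x. ((c + of_int e) gchoose q1) * ((b + of_int x) gchoose q2)) 0 0 =
    (if m \<le> q1 then - (3 ^ m * ((-1) ^ (q1 - m) * of_nat (m choose (q1 - m)))) else 0)"
proof -
  let ?F = "\<lambda>e x. ((c + of_int e) gchoose q1) * ((b + of_int x) gchoose q2)"
  let ?v = "(if m \<le> q1 then (-1) ^ (q1 - m) * of_nat (m choose (q1 - m)) else 0) :: 'a"
  have z: "act2 ((1 - X2) ^ m * (X2 - Y2) ^ m) ?F e x = ?v" for e x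
  proof -
    have t: "of_nat (m choose s) * (act1 ((1 - PX) ^ m * (PX - 1) ^ s) (\<lambda>e. (c + of_int e) gchoose q1) e * act1 ((1 - PX) ^ (m - s)) (\<lambda>x. (b + of_int x) gchoose q2) x)
      = (if s = q1 - m \<and> m \<le> q1 then (-1) ^ (q1 - m) * of_nat (m choose (q1 - m)) else 0)"
      if "s \<le> m" for s
    proof (cases "s = q1 - m \<and> m \<le> q1")
      case True
      have h: "q2 - (m - s) = 0" "q1 - (m + s) = 0" "m + s \<le> q1" "m - s \<le> q2" using True assms that by auto
      have "(-1::'a) ^ m * (-1) ^ (m - s) = (-1) ^ (m + (m - s))" by (simp add: power_add)
      also have "m + (m - s) = s + 2 * (m - s)" using that by simp
      also have "(-1::'a) ^ (s + 2 * (m - s)) = (-1) ^ s" by (simp add: power_add power_mult)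
      finally have sg: "(-1::'a) ^ m * (-1) ^ (m - s) = (-1) ^ s" .
      show ?thesis using True h sg
        by (simp only: act1_pow_1mX act1_pow_1mX' act1_diffop_gbinomial) simp
    next
      case False
      hence "\<not> (m + s \<le> q1 \<and> m - s \<le> q2)" using assms that by auto
      thus ?thesis using False
        by (simp only: act1_pow_1mX act1_pow_1mX' act1_diffop_gbinomial) auto
    qed
    have "act2 ((1 - X2) ^ m * (X2 - Y2) ^ m) ?F e x
       = (\<Sum>s\<le>m. (if s = q1 - m \<and> m \<le> q1 then (-1) ^ (q1 - m) * of_nat (m choose (q1 - m)) else 0))"
      by (simp only: inner_expand) (rule sum.cong[OF refl], rule t, simp)
    also have "\<dots> = ?v"
    proof (cases "m \<le> q1")
      case True
      hence "q1 - m \<le> m" using assms by simp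
      thus ?thesis using True by (simp add: sum.delta')
    next
      case False
      thus ?thesis by simp
    qed
    finally show ?thesis .
  qed
  have "act2 (Kp m) ?F 0 0 = act2 (- Y2 * (1 + X2 + Y2) ^ m) (act2 ((1 - X2) ^ m * (X2 - Y2) ^ m) ?F) 0 0"
    unfolding Kp_split by (rule act2_mult)
  also have "\<dots> = act2 (- Y2 * (1 + X2 + Y2) ^ m) (\<lambda>e x. ?v) 0 0"
    by (rule act2_cong) (rule z)
  also have "\<dots> = - act2 ((1 + X2 + Y2) ^ m) (\<lambda>e x. ?v) 0 1"
    by (simp only: act2_minus act2_mult act2_Y2) simp
  also have "\<dots> = - (3 ^ m * ?v)" by (simp only: act2_const_fun_W)
  finally show ?thesis by simp
qed


lemma pf1:
  fixes z :: "'a::field_char_0"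
  assumes "\<And>r. r \<le> n \<Longrightarrow> z + of_nat r \<noteq> 0"
  shows "(\<Sum>r\<le>n. (-1) ^ r * of_nat (n choose r) / (z + of_nat r)) = fact n / pochhammer z (Suc n)"
  using assms
proof (induction n arbitrary: z)
  case 0
  then show ?case by simp
next
  case (Suc n)
  have nz: "z + of_nat r \<noteq> 0" if "r \<le> Suc n" for r using Suc.prems that by blast
  have nz1: "z + 1 + of_nat r \<noteq> 0" if "r \<le> n" for r
    using nz[of "Suc r"] that by (simp add: algebra_simps)
  have IH0: "(\<Sum>r\<le>n. (-1) ^ r * of_nat (n choose r) / (z + of_nat r)) = fact n / pochhammer z (Suc n)"
    using Suc.IH nz by simp
  have IH1: "(\<Sum>r\<le>n. (-1) ^ r * of_nat (n choose r) / (z + 1 + of_nat r)) = fact n / pochhammer (z + 1) (Suc n)"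
    using Suc.IH[of "z + 1"] nz1 by simp
  have split0: "(\<Sum>r\<le>n. (-1) ^ r * of_nat (n choose r) / (z + of_nat r)) =
      1 / z + (\<Sum>r\<le>n. (-1) ^ Suc r * of_nat (n choose Suc r) / (z + 1 + of_nat r))"
  proof -
    have "(\<Sum>r\<le>n. (-1) ^ r * of_nat (n choose r) / (z + of_nat r)) =
        (\<Sum>r\<le>Suc n. (-1) ^ r * of_nat (n choose r) / (z + of_nat r))"
      by simp
    also have "\<dots> = 1 / z + (\<Sum>r\<le>n. (-1) ^ Suc r * of_nat (n choose Suc r) / (z + of_nat (Suc r)))"
      by (subst sum.atMost_Suc_shift) simp
    finally show ?thesis by (simp add: algebra_simps)
  qed
  have "(\<Sum>r\<le>Suc n. (-1) ^ r * of_nat (Suc n choose r) / (z + of_nat r)) =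
      1 / z + (\<Sum>r\<le>n. (-1) ^ Suc r * of_nat (Suc n choose Suc r) / (z + of_nat (Suc r)))"
    by (subst sum.atMost_Suc_shift) simp
  also have "\<dots> = 1 / z + (\<Sum>r\<le>n. (-1) ^ Suc r * of_nat (n choose Suc r) / (z + 1 + of_nat r))
        - (\<Sum>r\<le>n. (-1) ^ r * of_nat (n choose r) / (z + 1 + of_nat r))"
    by (simp add: sum_subtractf[symmetric] sum.distrib[symmetric] algebra_simps add_divide_distrib diff_divide_distrib)
  also have "\<dots> = fact n / pochhammer z (Suc n) - fact n / pochhammer (z + 1) (Suc n)"
    using split0 IH0 IH1 by simp
  also have "\<dots> = fact (Suc n) / pochhammer z (Suc (Suc n))"
  proof -
    have p1: "pochhammer z (Suc (Suc n)) = pochhammer z (Suc n) * (z + of_nat (Suc n))"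
      by (rule pochhammer_Suc)
    have p2: "pochhammer z (Suc (Suc n)) = z * pochhammer (z + 1) (Suc n)"
      by (rule pochhammer_rec)
    have a: "pochhammer z (Suc n) \<noteq> 0" using nz
      by (auto simp: pochhammer_eq_0_iff add_eq_0_iff2)
    have b: "pochhammer (z + 1) (Suc n) \<noteq> 0"
    proof
      assume "pochhammer (z + 1) (Suc n) = 0"
      then obtain k where "k < Suc n" "z + 1 = - of_nat k" by (auto simp: pochhammer_eq_0_iff)
      with nz1[of k] show False by simp
    qed
    have c: "z \<noteq> 0" using nz[of 0] by simp
    have d: "z + of_nat (Suc n) \<noteq> 0" using nz[of "Suc n"] by simp
    have e1: "fact n / pochhammer z (Suc n) = fact n * (z + of_nat (Suc n)) / pochhammer z (Suc (Suc n))"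
      unfolding p1 using a d by simp
    have e2: "fact n / pochhammer (z + 1) (Suc n) = fact n * z / pochhammer z (Suc (Suc n))"
      unfolding p2 using b c by simp
    have "fact n / pochhammer z (Suc n) - fact n / pochhammer (z + 1) (Suc n)
        = (fact n * (z + of_nat (Suc n)) - fact n * z) / pochhammer z (Suc (Suc n))"
      unfolding e1 e2 by (rule diff_divide_distrib[symmetric])
    also have "fact n * (z + of_nat (Suc n)) - fact n * z = (fact (Suc n) :: 'a)"
      by (simp add: algebra_simps)
    finally show ?thesis .
  qed
  finally show ?case .
qed


lemma act1_m1pow: "act1 ((-1) ^ r * p) g y = (-1) ^ r * act1 p g y"
proof (induction r)
  case 0
  then show ?case by simp
next
  case (Suc r)
  have "(-1) ^ Suc r * p = - ((-1) ^ r * p)" by simp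
  hence "act1 ((-1) ^ Suc r * p) g y = - act1 ((-1) ^ r * p) g y" by (simp only: act1_minus)
  thus ?case using Suc.IH by simp
qed

lemma binom_1mx: "(1 - x :: 'b::comm_ring_1) ^ q = (\<Sum>r\<le>q. of_nat (q choose r) * ((-1) ^ r * x ^ r))"
proof -
  have "(1 - x) ^ q = (- x + 1) ^ q" by simp
  also have "\<dots> = (\<Sum>r\<le>q. of_nat (q choose r) * (- x) ^ r * 1 ^ (q - r))" by (rule binomial_ring)
  also have "\<dots> = (\<Sum>r\<le>q. of_nat (q choose r) * ((-1) ^ r * x ^ r))"
    by (rule sum.cong[OF refl]) (simp only: power_one mult_1_right power_minus[of x] mult.assoc)
  finally show ?thesis .
qed

lemma binom_1px: "(1 + x :: 'b::comm_ring_1) ^ q = (\<Sum>r\<le>q. of_nat (q choose r) * x ^ r)"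
proof -
  have "(1 + x) ^ q = (x + 1) ^ q" by (simp add: add.commute)
  also have "\<dots> = (\<Sum>r\<le>q. of_nat (q choose r) * x ^ r * 1 ^ (q - r))" by (rule binomial_ring)
  finally show ?thesis by simp
qed

lemma act1_1mX_pow:
  "act1 ((1 - PX) ^ q) g y = (\<Sum>r\<le>q. (-1) ^ r * of_nat (q choose r) * g (y + int r))"
  unfolding binom_1mx act1_sum
  by (rule sum.cong[OF refl]) (simp only: act1_of_nat_mult act1_m1pow act1_Xpow mult_ac)

lemma act1_1mX2_pow:
  "act1 ((1 - PX ^ 2) ^ q) g y = (\<Sum>s\<le>q. (-1) ^ s * of_nat (q choose s) * g (y + int (2 * s)))"
  unfolding binom_1mx[of "PX ^ 2"] act1_sum
  by (rule sum.cong[OF refl]) (simp only: act1_of_nat_mult act1_m1pow power_mult[symmetric] act1_Xpow mult_ac)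

lemma Ak_alt_gen:
  assumes "k \<le> m"
  shows "(1 - x :: 'b::comm_ring_1) ^ m * x ^ (m - k) * (1 + x) ^ (m - k) = x ^ (m - k) * ((1 - x ^ 2) ^ (m - k) * (1 - x) ^ k)"
proof -
  have m: "m = (m - k) + k" using assms by simp
  have a: "(1 - x) ^ m = (1 - x) ^ (m - k) * (1 - x) ^ k"
    by (subst m) (simp only: power_add)
  have c: "(1 - x) * (1 + x) = 1 - x ^ 2" by (simp add: power2_eq_square algebra_simps)
  have b: "(1 - x) ^ (m - k) * (1 + x) ^ (m - k) = (1 - x ^ 2) ^ (m - k)"
    by (simp only: power_mult_distrib[symmetric] c)
  show ?thesis by (simp only: a b[symmetric] mult_ac)
qed

lemma act1_Ak:
  assumes "k \<le> m"
  shows "act1 (Ak m k) g y = (\<Sum>s\<le>m - k. (-1) ^ s * of_nat ((m - k) choose s) *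
      (\<Sum>r\<le>k. (-1) ^ r * of_nat (k choose r) * g (y + int (m - k + 2 * s + r))))"
  unfolding Ak_def Ak_alt_gen[OF assms] act1_mult act1_Xpow act1_1mX2_pow act1_1mX_pow
  by (simp add: sum_distrib_left algebra_simps)

lemma act1_of_nat: "act1 (of_nat c) g y = of_nat c * g y"
  by (simp add: of_nat_poly)

lemma act1_Bk:
  "act1 (Bk k) g y = (\<Sum>p\<le>k. of_nat (k choose p) * g (y + int (k + 1 + p)))"
  unfolding Bk_def act1_mult act1_Xpow binom_1px act1_sum
  by (rule sum.cong[OF refl]) (simp only: act1_mult act1_of_nat act1_Xpow, simp add: algebra_simps)


definition aa :: "nat \<Rightarrow> 'a::field_char_0 \<Rightarrow> 'a" where
  "aa n l = 2 * (of_nat n + l) + 2"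

definition iota :: "nat \<Rightarrow> 'a::field_char_0 \<Rightarrow> nat \<Rightarrow> int \<Rightarrow> 'a" where
  "iota n l j e = 1 / (aa n l - 3 * of_nat j + of_int e + 1)"

lemma ymat_term:
  fixes l :: "'a::field_char_0"
  assumes k: "1 \<le> k" "k \<le> t" "t \<le> j"
    and nz: "\<And>r. r < k \<Longrightarrow> of_int (3 - int k + 2 * int n - 2 * int t) + 2 * l + of_nat r \<noteq> (0::'a)"
  shows "2 * (-1) ^ (t + j) * pochhammer (of_nat j) j
        / (3 ^ (j - 1) * pochhammer 1 (j - t) * pochhammer 1 (t - k)
           * pochhammer (of_int (3 - int k + 2 * int n - 2 * int t) + 2 * l) k)
      = 2 * pochhammer (of_nat j) j / (3 ^ (j - 1) * fact (k - 1) * fact (j - k)) *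
        ((-1) ^ (j - t) * of_nat ((j - k) choose (j - t)) *
         (\<Sum>r\<le>k - 1. (-1) ^ r * of_nat ((k - 1) choose r) * iota n l j (0 + int (j - k + 2 * (j - t) + r))))"
proof -
  define z where "z = of_int (3 - int k + 2 * int n - 2 * int t) + 2 * l"
  have kk: "Suc (k - 1) = k" using k by simp
  have pf: "(\<Sum>r\<le>k - 1. (-1) ^ r * of_nat ((k - 1) choose r) / (z + of_nat r)) = fact (k - 1) / pochhammer z k"
    using pf1[of "k - 1" z] nz k unfolding z_def kk by fastforce
  have zr: "z + of_nat r = aa n l - 3 * of_nat j + of_int (int (j - k + 2 * (j - t) + r)) + 1" for r
    using k unfolding z_def aa_def by (simp add: of_nat_diff algebra_simps)
  have pz: "pochhammer z k \<noteq> 0"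
  proof
    assume "pochhammer z k = 0"
    then obtain r where "r < k" "z = - of_nat r" by (auto simp: pochhammer_eq_0_iff)
    with nz[of r] show False unfolding z_def by simp
  qed
  have inv: "1 / pochhammer z k = (1 / fact (k - 1)) *
      (\<Sum>r\<le>k - 1. (-1) ^ r * of_nat ((k - 1) choose r) * iota n l j (0 + int (j - k + 2 * (j - t) + r)))"
  proof -
    have "(\<Sum>r\<le>k - 1. (-1) ^ r * of_nat ((k - 1) choose r) * iota n l j (0 + int (j - k + 2 * (j - t) + r)))
        = (\<Sum>r\<le>k - 1. (-1) ^ r * of_nat ((k - 1) choose r) / (z + of_nat r))"
      by (rule sum.cong[OF refl]) (simp add: iota_def zr)
    also have "\<dots> = fact (k - 1) / pochhammer z k" by (rule pf)
    finally show ?thesis by simp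
  qed
  have sgn: "(-1::'a) ^ (t + j) = (-1) ^ (j - t)"
  proof -
    have e: "t + j = (j - t) + 2 * t" using k by simp
    have "(-1::'a) ^ (t + j) = (-1) ^ ((j - t) + 2 * t)" by (subst e) (rule refl)
    also have "\<dots> = (-1) ^ (j - t)" by (simp only: power_add power_mult) simp
    finally show ?thesis .
  qed
  have bf: "of_nat ((j - k) choose (j - t)) / fact (j - k) = (1::'a) / (fact (j - t) * fact (t - k))"
  proof -
    have "j - t \<le> j - k" "j - k - (j - t) = t - k" using k by auto
    thus ?thesis by (simp add: binomial_fact)
  qed
  have "2 * (-1) ^ (t + j) * pochhammer (of_nat j) j
        / (3 ^ (j - 1) * pochhammer 1 (j - t) * pochhammer 1 (t - k) * pochhammer z k)
      = 2 * pochhammer (of_nat j) j / 3 ^ (j - 1) * (-1) ^ (j - t) * ((1::'a) / (fact (j - t) * fact (t - k))) * (1 / pochhammer z k)"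
    by (simp add: sgn pochhammer_fact[symmetric] mult_ac)
  also have "\<dots> = 2 * pochhammer (of_nat j) j / 3 ^ (j - 1) * (-1) ^ (j - t) * (of_nat ((j - k) choose (j - t)) / fact (j - k)) *
      ((1 / fact (k - 1)) * (\<Sum>r\<le>k - 1. (-1) ^ r * of_nat ((k - 1) choose r) * iota n l j (0 + int (j - k + 2 * (j - t) + r))))"
    by (simp only: bf inv)
  also have "\<dots> = 2 * pochhammer (of_nat j) j / (3 ^ (j - 1) * fact (k - 1) * fact (j - k)) *
        ((-1) ^ (j - t) * of_nat ((j - k) choose (j - t)) *
         (\<Sum>r\<le>k - 1. (-1) ^ r * of_nat ((k - 1) choose r) * iota n l j (0 + int (j - k + 2 * (j - t) + r))))"
    by (simp add: field_simps)
  finally show ?thesis unfolding z_def .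
qed

lemma ymat_conv:
  fixes l :: "'a::field_char_0"
  assumes k: "1 \<le> k" "k \<le> j"
    and nz: "\<And>t r. k \<le> t \<Longrightarrow> t \<le> j \<Longrightarrow> r < k \<Longrightarrow> of_int (3 - int k + 2 * int n - 2 * int t) + 2 * l + of_nat r \<noteq> (0::'a)"
  shows "ymat n l k j = 2 * pochhammer (of_nat j) j / (3 ^ (j - 1) * fact (k - 1) * fact (j - k)) * act1 (Ak (j - 1) (k - 1)) (iota n l j) 0"
proof -
  let ?C = "2 * pochhammer (of_nat j) j / (3 ^ (j - 1) * fact (k - 1) * fact (j - k)) :: 'a"
  let ?H = "\<lambda>s. (-1) ^ s * of_nat ((j - k) choose s) *
         (\<Sum>r\<le>k - 1. (-1) ^ r * of_nat ((k - 1) choose r) * iota n l j (0 + int (j - k + 2 * s + r)))"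
  have "ymat n l k j = (\<Sum>t = k..j. ?C * ?H (j - t))"
    unfolding ymat_def
    by (rule sum.cong[OF refl]) (rule ymat_term, use k nz in auto)
  also have "\<dots> = (\<Sum>s\<le>j - k. ?C * ?H s)"
    by (rule sum.reindex_bij_witness[where i="\<lambda>s. j - s" and j="\<lambda>t. j - t"]) (use k in auto)
  also have "\<dots> = ?C * act1 (Ak (j - 1) (k - 1)) (iota n l j) 0"
  proof -
    have "j - 1 - (k - 1) = j - k" using k by simp
    thus ?thesis using k by (simp add: act1_Ak sum_distrib_left)
  qed
  finally show ?thesis .
qed


definition fb :: "nat \<Rightarrow> 'a::field_char_0 \<Rightarrow> nat \<Rightarrow> int \<Rightarrow> 'a" where
  "fb n l i x = ((- (of_nat n + l) - 2 + of_nat i) + of_int x) gchoose (2 * i - 1)"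

lemma bmat_conv:
  fixes l :: "'a::field_char_0"
  assumes "1 \<le> k"
  shows "bmat n l i k = (-1) ^ k * act1 (Bk (k - 1)) (fb n l i) 0"
proof -
  have "bmat n l i k = (\<Sum>p\<le>k - 1. (-1) ^ k * (of_nat ((k - 1) choose p) * fb n l i (0 + int (k - 1 + 1 + p))))"
    unfolding bmat_def atMost_atLeast0
  proof (rule sum.cong[OF refl])
    fix p assume "p \<in> {0..k - 1}"
    have eq: "of_int (int p - int n + int k + int i - 2) - l = (- (of_nat n + l) - 2 + of_nat i) + (of_int (0 + int (k - 1 + 1 + p)) :: 'a)"
      using assms by (simp add: of_nat_diff algebra_simps)
    thus "(-1) ^ k * of_nat ((k - 1) choose p) * ((of_int (int p - int n + int k + int i - 2) - l) gchoose (2 * i - 1))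
        = (-1) ^ k * (of_nat ((k - 1) choose p) * fb n l i (0 + int (k - 1 + 1 + p)))"
      unfolding fb_def by (simp only: eq mult.assoc)
  qed
  also have "\<dots> = (-1) ^ k * act1 (Bk (k - 1)) (fb n l i) 0"
    by (simp add: act1_Bk sum_distrib_left)
  finally show ?thesis .
qed

lemma T_reduce:
  fixes l :: "'a::field_char_0"
  assumes j: "1 \<le> j" "j \<le> n"
    and nz: "\<And>k t r. 1 \<le> k \<Longrightarrow> k \<le> t \<Longrightarrow> t \<le> j \<Longrightarrow> r < k \<Longrightarrow> of_int (3 - int k + 2 * int n - 2 * int t) + 2 * l + of_nat r \<noteq> (0::'a)"
  shows "(\<Sum>k = 1..n. bmat n l i k * ymat n l k j) =
    2 * pochhammer (of_nat j) j / (3 ^ (j - 1) * fact (j - 1)) * act2 (Kp (j - 1)) (\<lambda>e x. iota n l j e * fb n l i x) 0 0"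
proof -
  let ?m = "j - 1"
  let ?P = "2 * pochhammer (of_nat j) j :: 'a"
  have y0: "ymat n l k j = 0" if "j < k" for k
    using that by (simp add: ymat_def)
  have "(\<Sum>k = 1..n. bmat n l i k * ymat n l k j) = (\<Sum>k = 1..j. bmat n l i k * ymat n l k j)"
    by (rule sum.mono_neutral_right) (use j y0 in auto)
  also have "\<dots> = (\<Sum>k'\<le>?m. bmat n l i (k' + 1) * ymat n l (k' + 1) j)"
    by (rule sum.reindex_bij_witness[where i="\<lambda>k'. k' + 1" and j="\<lambda>k. k - 1"]) (use j in auto)
  also have "\<dots> = (\<Sum>k'\<le>?m. ?P / (3 ^ (j - 1) * fact ?m) *
        (of_nat (?m choose k') * (-1) ^ (k' + 1) * (act1 (Ak ?m k') (iota n l j) 0 * act1 (Bk k') (fb n l i) 0)))"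
  proof (rule sum.cong[OF refl])
    fix k' assume k': "k' \<in> {..?m}"
    have nz': "of_int (3 - int (k' + 1) + 2 * int n - 2 * int t) + 2 * l + of_nat r \<noteq> (0::'a)"
      if "k' + 1 \<le> t" "t \<le> j" "r < k' + 1" for t r
      by (rule nz) (use that in auto)
    have yc0: "ymat n l (k' + 1) j = ?P / (3 ^ (j - 1) * fact (k' + 1 - 1) * fact (j - (k' + 1))) * act1 (Ak (j - 1) (k' + 1 - 1)) (iota n l j) 0"
      by (rule ymat_conv) (use j k' nz' in auto)
    have e1: "k' + 1 - 1 = k'" "j - (k' + 1) = ?m - k'" by auto
    have yc: "ymat n l (k' + 1) j = ?P / (3 ^ (j - 1) * fact k' * fact (?m - k')) * act1 (Ak ?m k') (iota n l j) 0"
      using yc0 unfolding e1 .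
    have bc: "bmat n l i (k' + 1) = (-1) ^ (k' + 1) * act1 (Bk k') (fb n l i) 0"
      using bmat_conv[of "k' + 1" n l i] by simp
    have bf: "of_nat (?m choose k') / fact ?m = (1::'a) / (fact k' * fact (?m - k'))"
      using k' by (simp add: binomial_fact)
    have "?P / (3 ^ (j - 1) * fact k' * fact (?m - k')) = ?P / 3 ^ (j - 1) * (1 / (fact k' * fact (?m - k')))"
      by (simp add: field_simps)
    also have "\<dots> = ?P / 3 ^ (j - 1) * (of_nat (?m choose k') / fact ?m)" by (simp only: bf)
    finally have cc: "?P / (3 ^ (j - 1) * fact k' * fact (?m - k')) = ?P / (3 ^ (j - 1) * fact ?m) * of_nat (?m choose k')"
      by (simp add: field_simps)
    show "bmat n l i (k' + 1) * ymat n l (k' + 1) j = ?P / (3 ^ (j - 1) * fact ?m) *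
        (of_nat (?m choose k') * (-1) ^ (k' + 1) * (act1 (Ak ?m k') (iota n l j) 0 * act1 (Bk k') (fb n l i) 0))"
      unfolding yc bc cc by (simp add: mult_ac)
  qed
  also have "\<dots> = ?P / (3 ^ (j - 1) * fact ?m) * act2 (Kp ?m) (\<lambda>e x. iota n l j e * fb n l i x) 0 0"
    by (simp add: act2_Kp_sep1 sum_distrib_left)
  finally show ?thesis by simp
qed


lemma aa_ne:
  fixes l :: "'a::field_char_0"
  assumes nopole: "\<And>k t. 1 \<le> k \<Longrightarrow> k \<le> t \<Longrightarrow> t \<le> n \<Longrightarrow>
          pochhammer (of_int (3 - int k + 2 * int n - 2 * int t) + 2 * l) k \<noteq> 0"
    and v: "2 \<le> v" "v + 1 \<le> 3 * n" "v \<noteq> 3"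
  shows "aa n l \<noteq> of_nat v"
proof
  assume A: "aa n l = of_nat v"
  define t where "t = (v + 3) div 3"
  define r where "r = v - 2 * t"
  have t1: "1 \<le> t" "t \<le> n" "2 * t \<le> v" "r < t" using v unfolding t_def r_def by presburger+
  have "pochhammer (of_int (3 - int t + 2 * int n - 2 * int t) + 2 * l) t \<noteq> (0::'a)"
    using nopole[of t t] t1 by simp
  moreover have "of_int (3 - int t + 2 * int n - 2 * int t) + 2 * l = - of_nat (t - 1 - r) \<and> t - 1 - r < t"
  proof -
    have "(of_nat v :: 'a) = of_nat (2 * t + r)" using t1 unfolding r_def by simp
    hence "aa n l = 2 * of_nat t + of_nat r" using A by simp
    hence "2 * (of_nat n + l) + 2 = 2 * of_nat t + (of_nat r :: 'a)" unfolding aa_def .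
    thus ?thesis using t1 by (simp add: of_nat_diff algebra_simps)
  qed
  ultimately show False by (auto simp: pochhammer_eq_0_iff)
qed

lemma fb_odd:
  fixes l :: "'a::field_char_0"
  assumes "1 \<le> i"
  shows "fb n l i (int (3 * m + 2) - e - x) =
    - (((aa n l - 3 * of_nat (m + 1) + 1 + of_int e) + ((- (of_nat n + l) - 2 + of_nat i) + of_int x)) gchoose (2 * i - 1))"
proof -
  let ?M = "2 * i - 1"
  let ?b = "- (of_nat n + l) - 2 + of_nat i :: 'a"
  have "fb n l i (int (3 * m + 2) - e - x) = (-1) ^ ?M * ((of_nat ?M - (?b + of_int (int (3 * m + 2) - e - x)) - 1) gchoose ?M)"
    unfolding fb_def by (rule gbinomial_negated_upper)
  also have "of_nat ?M - (?b + of_int (int (3 * m + 2) - e - x)) - 1 =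
      (aa n l - 3 * of_nat (m + 1) + 1 + of_int e) + (?b + of_int x)"
    using assms unfolding aa_def by (simp add: of_nat_diff algebra_simps)
  also have "(-1::'a) ^ ?M = -1"
  proof -
    have "?M = Suc (2 * (i - 1))" using assms by simp
    thus ?thesis by (simp only: power_Suc power_mult) simp
  qed
  finally show ?thesis by simp
qed

lemma vdm_split:
  fixes c b :: "'a::field_char_0"
  assumes "c + of_int e + 1 \<noteq> 0" "1 \<le> M"
  shows "(1 / (c + of_int e + 1)) * (((c + 1 + of_int e) + (b + of_int x)) gchoose M) =
    (1 / (c + of_int e + 1)) * ((b + of_int x) gchoose M) +
    (\<Sum>q<M. (1 / of_nat (q + 1)) * (((c + of_int e) gchoose q) * ((b + of_int x) gchoose (M - 1 - q))))"
proof -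
  let ?A = "c + 1 + of_int e" and ?B = "b + of_int x"
  have "(?A + ?B) gchoose M = (\<Sum>k\<le>M. (?A gchoose k) * (?B gchoose (M - k)))"
    using gbinomial_Vandermonde[of ?A ?B M] by (simp add: atMost_atLeast0)
  also have "\<dots> = (?B gchoose M) + (\<Sum>q<M. (?A gchoose Suc q) * (?B gchoose (M - 1 - q)))"
  proof -
    obtain M' where M': "M = Suc M'" using assms(2) by (cases M) auto
    show ?thesis unfolding M' by (subst sum.atMost_Suc_shift) (simp add: lessThan_Suc_atMost)
  qed
  finally have v: "(?A + ?B) gchoose M = (?B gchoose M) + (\<Sum>q<M. (?A gchoose Suc q) * (?B gchoose (M - 1 - q)))" .
  have Aeq: "?A = c + of_int e + 1" by simp
  have ab: "(1 / (c + of_int e + 1)) * (?A gchoose Suc q) = (1 / of_nat (q + 1)) * ((c + of_int e) gchoose q)" for q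
  proof -
    have "of_nat (Suc q) * ((c + of_int e + 1) gchoose Suc q) = (c + of_int e + 1) * ((c + of_int e + 1 - 1) gchoose q)"
      by (rule gbinomial_absorption)
    hence "of_nat (Suc q) * ((c + of_int e + 1) gchoose Suc q) = (c + of_int e + 1) * ((c + of_int e) gchoose q)" by simp
    hence "((c + of_int e + 1) gchoose Suc q) = (c + of_int e + 1) * ((c + of_int e) gchoose q) / of_nat (Suc q)"
      by (simp add: field_simps del: of_nat_Suc)
    thus ?thesis unfolding Aeq using assms(1) by (simp add: field_simps del: of_nat_Suc)
  qed
  have "(1 / (c + of_int e + 1)) * (\<Sum>q<M. (?A gchoose Suc q) * (?B gchoose (M - 1 - q)))
      = (\<Sum>q<M. (1 / of_nat (q + 1)) * (((c + of_int e) gchoose q) * (?B gchoose (M - 1 - q))))"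
    unfolding sum_distrib_left
    by (rule sum.cong[OF refl]) (simp only: mult.assoc[symmetric] ab)
  thus ?thesis unfolding v by (simp only: distrib_left)
qed


lemma arith_col: assumes "3*m+2-w = (3::nat)" "w = m - k + 2*s + r" "s \<le> m - k" "r \<le> k" "k \<le> m" shows False
proof (cases "k = 0")
  case True
  hence "m + 2 * s + 3 = 3 * m + 2" using assms by simp
  hence "2 * s + 1 = 2 * (m::nat)" by simp
  thus False by presburger
next
  case False
  thus False using assms by linarith
qed

lemma Pi_main:
  fixes l :: "'a::field_char_0"
  assumes i: "1 \<le> i" and j: "j = m + 1" "j \<le> n"
    and nopole: "\<And>k t. 1 \<le> k \<Longrightarrow> k \<le> t \<Longrightarrow> t \<le> n \<Longrightarrow>
          pochhammer (of_int (3 - int k + 2 * int n - 2 * int t) + 2 * l) k \<noteq> 0"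
  defines "c \<equiv> aa n l - 3 * of_nat j" and "b \<equiv> - (of_nat n + l) - 2 + of_nat i"
  shows "2 * act2 (Kp m) (\<lambda>e x. iota n l j e * fb n l i x) 0 0 =
    - (\<Sum>q<2 * i - 1. (1 / of_nat (q + 1)) *
         act2 (Kp m) (\<lambda>e x. ((c + of_int e) gchoose q) * ((b + of_int x) gchoose (2 * i - 1 - 1 - q))) 0 0)"
proof -
  define M where "M = 2 * i - 1"
  have M1: "1 \<le> M" using i unfolding M_def by simp
  define G where "G = (\<lambda>e x. iota n l j e * fb n l i x)"
  define H where "H = (\<lambda>e x. (1 / (c + of_int e + 1)) * (((c + 1 + of_int e) + (b + of_int x)) gchoose M))"
  define S where "S = (\<lambda>e x. \<Sum>q<M. (1 / of_nat (q + 1)) * (((c + of_int e) gchoose q) * ((b + of_int x) gchoose (M - 1 - q))))"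
  define D where "D = (\<lambda>e x. H e x - G e x - S e x)"
  have iota_c: "iota n l j e = 1 / (c + of_int e + 1)" for e unfolding iota_def c_def by simp
  have fb_b: "fb n l i x = (b + of_int x) gchoose M" for x unfolding fb_def b_def M_def by simp
  have s1: "act2 (Kp m) G 0 0 = - act2 (Kp m) H 0 0"
  proof -
    have "act2 (Kp m) G 0 0 = act2 (Kp m) (\<lambda>e x. G e (int (3 * m + 2) - e - x)) 0 0"
      by (rule K_symmetry[symmetric])
    also have "\<dots> = act2 (Kp m) (\<lambda>e x. (-1) * H e x) 0 0"
    proof (rule act2_cong)
      fix e x
      have "G e (int (3 * m + 2) - e - x) = iota n l j e * fb n l i (int (3 * m + 2) - e - x)"
        unfolding G_def ..
      also have "\<dots> = (-1) * H e x"
        unfolding fb_odd[OF i] H_def iota_c unfolding c_def b_def M_def j by (simp only: mult_minus1 mult_minus_right)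
      finally show "G e (int (3 * m + 2) - e - x) = (-1) * H e x" .
    qed
    also have "\<dots> = - act2 (Kp m) H 0 0" by (simp only: act2_fun_mult) simp
    finally show ?thesis .
  qed
  have s2: "act2 (Kp m) H 0 0 = act2 (Kp m) G 0 0 + act2 (Kp m) S 0 0 + act2 (Kp m) D 0 0"
  proof -
    have "act2 (Kp m) H 0 0 = act2 (Kp m) (\<lambda>e x. (G e x + S e x) + D e x) 0 0"
      by (rule act2_cong) (simp add: D_def)
    thus ?thesis by (simp only: act2_fun_add)
  qed
  have s3: "act2 (Kp m) S 0 0 = (\<Sum>q<M. (1 / of_nat (q + 1)) *
         act2 (Kp m) (\<lambda>e x. ((c + of_int e) gchoose q) * ((b + of_int x) gchoose (M - 1 - q))) 0 0)"
    unfolding S_def by (simp only: act2_fun_sum act2_fun_mult)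
  have Dz: "D e x = 0" if "c + of_int e + 1 \<noteq> 0" for e x
  proof -
    have "H e x = G e x + S e x" unfolding H_def G_def S_def iota_c fb_b by (rule vdm_split[OF that M1])
    thus ?thesis unfolding D_def by simp
  qed
  have s4: "act2 (Kp m) D 0 0 = 0"
  proof (cases "\<exists>e0. c + of_int e0 + 1 = 0")
    case True
    then obtain e0 where e0: "c + of_int e0 + 1 = 0" by blast
    have uniq: "e = e0" if "c + of_int e + 1 = 0" for e
    proof -
      have "c + of_int e + 1 = c + of_int e0 + 1" using that e0 by simp
      hence "of_int e = (of_int e0 :: 'a)" by simp
      thus ?thesis by simp
    qed
    have "act2 (Kp m) D 0 0 = act2 (Kp m) (\<lambda>e x. (if e = e0 then 1 else 0) * D e0 x) 0 0"
    proof (rule act2_cong)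
      fix e x
      show "D e x = (if e = e0 then 1 else 0) * D e0 x"
      proof (cases "e = e0")
        case True thus ?thesis by simp
      next
        case False
        hence "c + of_int e + 1 \<noteq> 0" using uniq by blast
        thus ?thesis using False Dz by simp
      qed
    qed
    also have "\<dots> = (\<Sum>k\<le>m. of_nat (m choose k) * (-1) ^ (k + 1) *
        (act1 (Ak m k) (\<lambda>e. if e = e0 then 1 else 0) 0 * act1 (Bk k) (D e0) 0))"
      by (rule act2_Kp_sep1)
    also have "\<dots> = 0"
    proof (rule sum.neutral, intro ballI)
      fix k assume k: "k \<in> {..m}"
      have ne: "0 + int (m - k + 2 * s + r) \<noteq> e0" if "s \<le> m - k" "r \<le> k" for s r
      proof
        assume eq: "0 + int (m - k + 2 * s + r) = e0"
        define w where "w = m - k + 2 * s + r"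
        have w: "w + 2 * k \<le> 3 * m" using k that unfolding w_def by auto
        have "aa n l = of_nat (3 * m + 2 - w)"
        proof -
          have "c + of_int (int w) + 1 = 0" using e0 eq unfolding w_def by simp
          hence "aa n l = 3 * of_nat (m + 1) - of_nat w - 1" unfolding c_def j by (simp add: algebra_simps)
          thus ?thesis using w by (simp add: of_nat_diff algebra_simps)
        qed
        moreover have "2 \<le> 3 * m + 2 - w" "3 * m + 2 - w + 1 \<le> 3 * n" using w j by auto
        ultimately have "3 * m + 2 - w = 3" using aa_ne[OF nopole, of "3 * m + 2 - w"] by blast
        thus False using arith_col[of m w k s r] w_def k that by auto
      qed
      have km: "k \<le> m" using k by simp
      have inner: "(-1) ^ s * of_nat ((m - k) choose s) * (\<Sum>r\<le>k. (-1) ^ r * of_nat (k choose r) * (if 0 + int (m - k + 2 * s + r) = e0 then 1 else 0)) = (0::'a)"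
        if "s \<in> {..m - k}" for s
      proof -
        have "(\<Sum>r\<le>k. (-1) ^ r * of_nat (k choose r) * (if 0 + int (m - k + 2 * s + r) = e0 then 1 else 0)) = (0::'a)"
          by (rule sum.neutral) (use ne that in simp)
        thus ?thesis by simp
      qed
      have z0: "act1 (Ak m k) (\<lambda>e. if e = e0 then 1 else (0::'a)) 0 = 0"
      proof -
        have "act1 (Ak m k) (\<lambda>e. if e = e0 then 1 else (0::'a)) 0 = (\<Sum>s\<le>m - k. (-1) ^ s * of_nat ((m - k) choose s) *
            (\<Sum>r\<le>k. (-1) ^ r * of_nat (k choose r) * (if 0 + int (m - k + 2 * s + r) = e0 then 1 else 0)))"
          by (rule act1_Ak[OF km])
        also have "\<dots> = (\<Sum>s\<le>m - k. (0::'a))"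
          by (rule sum.cong[OF refl], rule inner, assumption)
        finally show ?thesis by simp
      qed
      thus "of_nat (m choose k) * (-1) ^ (k + 1) *
        (act1 (Ak m k) (\<lambda>e. if e = e0 then 1 else 0) 0 * act1 (Bk k) (D e0) 0) = 0"
        by (simp only: z0 mult_zero_left mult_zero_right)
    qed
    finally show ?thesis .
  next
    case False
    hence "act2 (Kp m) D 0 0 = act2 (Kp m) (\<lambda>e x. 0) 0 0"
      by (intro act2_cong) (use Dz in blast)
    thus ?thesis by simp
  qed
  have "act2 (Kp m) G 0 0 = - (act2 (Kp m) G 0 0 + act2 (Kp m) S 0 0)"
    using s1 s2 s4 by simp
  hence "2 * act2 (Kp m) G 0 0 = - act2 (Kp m) S 0 0" by (simp add: algebra_simps eq_neg_iff_add_eq_0)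
  thus ?thesis unfolding s3 G_def M_def .
qed


lemma reindex_tail:
  fixes F :: "nat \<Rightarrow> 'a::comm_monoid_add"
  shows "(\<Sum>q<2 * m + 1. if m \<le> q then F (q - m) else 0) = (\<Sum>s\<le>m. F s)"
proof -
  have "(\<Sum>q<2 * m + 1. if m \<le> q then F (q - m) else 0) = (\<Sum>q\<in>{m..2 * m}. F (q - m))"
    by (rule sum.mono_neutral_cong_right) auto
  also have "\<dots> = (\<Sum>s\<le>m. F s)"
    by (rule sum.reindex_bij_witness[where i="\<lambda>s. s + m" and j="\<lambda>q. q - m"]) auto
  finally show ?thesis .
qed

lemma ofnat_pos_ne: "(of_nat (m + 1) + of_nat s :: 'a::field_char_0) \<noteq> 0"
proof -
  have "(of_nat (m + 1) + of_nat s :: 'a) = of_nat (Suc (m + s))" by simp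
  thus ?thesis by (simp del: of_nat_Suc)
qed

theorem lemma5p1:
  fixes n :: nat and l :: "'a::field_char_0"
  assumes "n \<ge> 1"
    and nopole: "\<And>k t. 1 \<le> k \<Longrightarrow> k \<le> t \<Longrightarrow> t \<le> n \<Longrightarrow>
          pochhammer (of_int (3 - int k + 2 * int n - 2 * int t) + 2 * l) k \<noteq> 0"
  shows "\<forall>i j. 1 \<le> i \<longrightarrow> i \<le> j \<longrightarrow> j \<le> n \<longrightarrow>
           (\<Sum>k = 1..n. bmat n l i k * ymat n l k j) = (if i = j then 1 else 0)"
proof (intro allI impI)
  fix i j :: nat
  assume i: "1 \<le> i" and ij: "i \<le> j" and jn: "j \<le> n"
  define m where "m = j - 1"
  have j: "j = m + 1" using i ij unfolding m_def by simp
  define c where "c = aa n l - 3 * of_nat j"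
  define b where "b = - (of_nat n + l) - 2 + of_nat i"
  define Pi where "Pi = act2 (Kp m) (\<lambda>e x. iota n l j e * fb n l i x) 0 0"
  define P :: 'a where "P = pochhammer (of_nat j) j"
  have nz: "of_int (3 - int k + 2 * int n - 2 * int t) + 2 * l + of_nat r \<noteq> (0::'a)"
    if "1 \<le> k" "k \<le> t" "t \<le> j" "r < k" for k t r
  proof
    assume "of_int (3 - int k + 2 * int n - 2 * int t) + 2 * l + of_nat r = (0::'a)"
    hence "of_int (3 - int k + 2 * int n - 2 * int t) + 2 * l = - (of_nat r :: 'a)"
      by (simp add: eq_neg_iff_add_eq_0)
    hence "pochhammer (of_int (3 - int k + 2 * int n - 2 * int t) + 2 * l) k = (0::'a)"
      using that by (auto simp: pochhammer_eq_0_iff)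
    thus False using nopole[of k t] that jn by simp
  qed
  have T: "(\<Sum>k = 1..n. bmat n l i k * ymat n l k j) = 2 * P / (3 ^ m * fact m) * Pi"
    unfolding Pi_def P_def m_def
    by (rule T_reduce) (use i ij jn nz in auto)
  have PM: "2 * Pi = - (\<Sum>q<2 * i - 1. (1 / of_nat (q + 1)) *
         act2 (Kp m) (\<lambda>e x. ((c + of_int e) gchoose q) * ((b + of_int x) gchoose (2 * i - 1 - 1 - q))) 0 0)"
    unfolding Pi_def c_def b_def by (rule Pi_main[OF i j jn nopole])
  have P0: "P \<noteq> 0"
  proof
    assume "P = 0"
    then obtain k where "k < j" "(of_nat j :: 'a) = - of_nat k" unfolding P_def by (auto simp: pochhammer_eq_0_iff)
    hence "(of_nat (j + k) :: 'a) = 0" by (simp add: eq_neg_iff_add_eq_0)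
    hence "j + k = 0" by (simp only: of_nat_eq_0_iff)
    thus False using i ij by simp
  qed
  show "(\<Sum>k = 1..n. bmat n l i k * ymat n l k j) = (if i = j then 1 else 0)"
  proof (cases "i = j")
    case False
    hence ilt: "i < j" using ij by simp
    have "act2 (Kp m) (\<lambda>e x. ((c + of_int e) gchoose q) * ((b + of_int x) gchoose (2 * i - 1 - 1 - q))) 0 0 = 0"
      if "q < 2 * i - 1" for q
      by (rule Kp_vanish) (use that ilt j i in auto)
    hence "2 * Pi = 0" unfolding PM by simp
    hence "Pi = 0" by simp
    thus ?thesis using False T by simp
  next
    case True
    have M: "2 * i - 1 = 2 * m + 1" using True j by simp
    have Z: "act2 (Kp m) (\<lambda>e x. ((c + of_int e) gchoose q) * ((b + of_int x) gchoose (2 * i - 1 - 1 - q))) 0 0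
        = (if m \<le> q then - (3 ^ m * ((-1) ^ (q - m) * of_nat (m choose (q - m)))) else 0)"
      if "q < 2 * i - 1" for q
      by (rule Kp_lead) (use that M in auto)
    have "(\<Sum>q<2 * i - 1. (1 / of_nat (q + 1)) *
         act2 (Kp m) (\<lambda>e x. ((c + of_int e) gchoose q) * ((b + of_int x) gchoose (2 * i - 1 - 1 - q))) 0 0)
        = (\<Sum>q<2 * m + 1. if m \<le> q then (1 / of_nat (q - m + m + 1)) * (- (3 ^ m * ((-1) ^ (q - m) * of_nat (m choose (q - m))))) else (0::'a))"
      unfolding M[symmetric] by (rule sum.cong[OF refl]) (subst Z, simp_all)
    also have "\<dots> = (\<Sum>s\<le>m. (1 / of_nat (s + m + 1)) * (- (3 ^ m * ((-1) ^ s * of_nat (m choose s)))))"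
      by (rule reindex_tail)
    also have "\<dots> = - (3 ^ m * (\<Sum>s\<le>m. (-1) ^ s * of_nat (m choose s) / (of_nat (m + 1) + of_nat s)))"
      by (simp add: sum_distrib_left sum_negf[symmetric] algebra_simps)
    also have "(\<Sum>s\<le>m. (-1) ^ s * of_nat (m choose s) / (of_nat (m + 1) + of_nat s)) = (fact m / pochhammer (of_nat (m + 1)) (Suc m) :: 'a)"
      by (rule pf1) (rule ofnat_pos_ne)
    also have "pochhammer (of_nat (m + 1)) (Suc m) = P" unfolding P_def j by simp
    finally have "2 * Pi = 3 ^ m * (fact m / P)" unfolding PM by simp
    hence "2 * P / (3 ^ m * fact m) * Pi = 1" using P0 by (simp add: field_simps)
    thus ?thesis using True T by simp
  qed
qed

end
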